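(* For all integers $r\ge 3$ and $n_1\ge n_2\ge\dots\ge n_r\ge 2$, $$\iota_0(r-2,n_1,\dots,n_r)=n_1+n_2+\dots+n_r-r+1.$$
   Context: Let $X_\ell=[n_\ell]$ for $1\le\ell\le r$. For $A,B\in X_1\times\dots\times X_r$, write $A\cap B=\{\ell\in[r]:A[\ell]=B[\ell]\}$, where $A[\ell]$ is the $\ell$-th coordinate. A family $\mathcal F\subseteq X_1\times\dots\times X_r$ is $t$-intersecting if $|A\cap B|\ge t$ for all $A,B\in\mathcal F$. Let $\bigcap\mathcal F=\{\ell\in[r]:\text{all members of }\mathcal F\text{ have the same }\ell\text{-th coordinate}\}$. A $t$-intersecting family is non-trivial if $|\bigcap\mathcal F|<t$. For integers $r>t\ge1$ and $n_1\ge\dots\ge n_r\ge 2$, $\iota_0(t,n_1,\dots,n_r)$ denotes the maximum size of a non-trivial $t$-intersecting family $\mathcal F\subseteq X_1\times\dots\times X_r$. *)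

theory Defs
  imports Main "HOL-Library.FuncSet"
begin

definition prod_space :: "nat \<Rightarrow> (nat \<Rightarrow> nat) \<Rightarrow> (nat \<Rightarrow> nat) set" where
  "prod_space r n = PiE {1..r} (\<lambda>l. {1..n l})"

text \<open>A \<inter> B = set of coordinates where A and B agree.\<close>
definition agree :: "nat \<Rightarrow> (nat \<Rightarrow> nat) \<Rightarrow> (nat \<Rightarrow> nat) \<Rightarrow> nat set" where
  "agree r A B = {l \<in> {1..r}. A l = B l}"

definition t_intersecting :: "nat \<Rightarrow> nat \<Rightarrow> (nat \<Rightarrow> nat) set \<Rightarrow> bool" where
  "t_intersecting r t F \<longleftrightarrow> (\<forall>A\<in>F. \<forall>B\<in>F. card (agree r A B) \<ge> t)"

definition common_coords :: "nat \<Rightarrow> (nat \<Rightarrow> nat) set \<Rightarrow> nat set" where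
  "common_coords r F = {l \<in> {1..r}. \<forall>A\<in>F. \<forall>B\<in>F. A l = B l}"

definition nontrivial_t_intersecting :: "nat \<Rightarrow> nat \<Rightarrow> (nat \<Rightarrow> nat) set \<Rightarrow> bool" where
  "nontrivial_t_intersecting r t F \<longleftrightarrow> t_intersecting r t F \<and> card (common_coords r F) < t"

definition iota0 :: "nat \<Rightarrow> nat \<Rightarrow> (nat \<Rightarrow> nat) \<Rightarrow> nat" where
  "iota0 t r n = Max {card F | F. F \<subseteq> prod_space r n \<and> nontrivial_t_intersecting r t F}"

end

theory Submission
  imports Defs
begin

definition close2 :: "nat set \<Rightarrow> (nat \<Rightarrow> nat) \<Rightarrow> (nat \<Rightarrow> nat) \<Rightarrow> bool" where
  "close2 I X Y \<longleftrightarrow> (\<exists>p q. \<forall>l\<in>I. l \<noteq> p \<longrightarrow> l \<noteq> q \<longrightarrow> X l = Y l)"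

definition close1 :: "nat set \<Rightarrow> (nat \<Rightarrow> nat) \<Rightarrow> (nat \<Rightarrow> nat) \<Rightarrow> bool" where
  "close1 I X Y \<longleftrightarrow> (\<exists>p. \<forall>l\<in>I. l \<noteq> p \<longrightarrow> X l = Y l)"

lemma W:
  assumes "close2 I X Y" "i \<in> I" "j \<in> I" "i \<noteq> j" "X i \<noteq> Y i" "X j \<noteq> Y j"
    "l \<in> I" "l \<noteq> i" "l \<noteq> j"
  shows "X l = Y l"
  using assms unfolding close2_def by metis

lemma close2_sym: "close2 I X Y \<Longrightarrow> close2 I Y X"
  unfolding close2_def by metis

lemma K:
  assumes "i \<in> I" "j \<in> I" "i \<noteq> j" "A i \<noteq> B i" "A j \<noteq> B j"
    and AB: "\<forall>l\<in>I. l \<noteq> i \<longrightarrow> l \<noteq> j \<longrightarrow> A l = B l"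
    and EA: "close2 I E A" and EB: "close2 I E B"
    and "k \<in> I" "k \<noteq> i" "k \<noteq> j" "E k \<noteq> A k"
  shows "(\<forall>l\<in>I. l \<noteq> i \<longrightarrow> l \<noteq> j \<longrightarrow> l \<noteq> k \<longrightarrow> E l = A l) \<and>
         ((E i = B i \<and> E j = A j) \<or> (E i = A i \<and> E j = B j))"
proof (intro conjI ballI impI)
  fix l assume l: "l \<in> I" "l \<noteq> i" "l \<noteq> j" "l \<noteq> k"
  show "E l = A l"
  proof (rule ccontr)
    assume h: "E l \<noteq> A l"
    have "E k \<noteq> B k" "E l \<noteq> B l" using AB assms l h by auto
    have "E i = A i" using W[OF EA, of l k i] assms l h by auto
    moreover have "E i = B i" using W[OF EB, of l k i] assms l \<open>E k \<noteq> B k\<close> \<open>E l \<noteq> B l\<close> by auto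
    ultimately show False using assms by simp
  qed
next
  have "E k \<noteq> B k" using AB assms by auto
  have 1: "E i = B i \<or> E j = B j" using W[OF EB, of i j k] assms \<open>E k \<noteq> B k\<close> by auto
  have 2: "E i = A i \<or> E j = A j" using W[OF EA, of i j k] assms by auto
  show "(E i = B i \<and> E j = A j) \<or> (E i = A i \<and> E j = B j)" using 1 2 assms by auto
qed

lemma upd_PiE: "f \<in> PiE I S \<Longrightarrow> i \<in> I \<Longrightarrow> v \<in> S i \<Longrightarrow> f(i:=v) \<in> PiE I S"
  by (auto simp: PiE_def extensional_def Pi_def)

lemma M2:
  assumes F: "F \<subseteq> PiE I S" and pw: "\<forall>X\<in>F. \<forall>Y\<in>F. close2 I X Y"
  and AF: "A \<in> F" "B \<in> F" "C \<in> F"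
  and ij: "i \<in> I" "j \<in> I" "k \<in> I" "i \<noteq> j" "k \<noteq> i" "k \<noteq> j"
  and ABi: "A i \<noteq> B i" "A j \<noteq> B j" and AB: "\<forall>l\<in>I. l \<noteq> i \<longrightarrow> l \<noteq> j \<longrightarrow> A l = B l"
  and Ck: "C k \<noteq> A k" and CA: "\<forall>l\<in>I. l \<noteq> i \<longrightarrow> l \<noteq> j \<longrightarrow> l \<noteq> k \<longrightarrow> C l = A l"
  and Cij: "C i = B i" "C j = A j"
  shows "(\<forall>E\<in>F. close1 I (A(i:=B i)) E) \<or> F \<subseteq> {A, B, C, C(i:=A i, j:=B j)}"
proof -
  define P where "P = A(i:=B i)"
  define C' where "C' = C(i:=A i, j:=B j)"
  have AP: "A \<in> PiE I S" "B \<in> PiE I S" "C \<in> PiE I S" using AF F by auto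
  have C'P: "C' \<in> PiE I S" unfolding C'_def
    by (intro upd_PiE) (use AP ij in \<open>auto intro: PiE_mem\<close>)
  have classify: "(\<forall>l\<in>I. l \<noteq> i \<longrightarrow> l \<noteq> j \<longrightarrow> E l = A l) \<or>
     (\<exists>k'\<in>I. k' \<noteq> i \<and> k' \<noteq> j \<and> (\<forall>l\<in>I. l \<noteq> i \<longrightarrow> l \<noteq> j \<longrightarrow> l \<noteq> k' \<longrightarrow> E l = A l)
        \<and> ((E i = B i \<and> E j = A j) \<or> (E i = A i \<and> E j = B j)))" if E: "E \<in> F" for E
  proof (cases "\<forall>l\<in>I. l \<noteq> i \<longrightarrow> l \<noteq> j \<longrightarrow> E l = A l")
    case True then show ?thesis by blast
  next
    case False
    then obtain k' where k': "k' \<in> I" "k' \<noteq> i" "k' \<noteq> j" "E k' \<noteq> A k'" by auto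
    have "close2 I E A" "close2 I E B" using pw E AF by auto
    from K[OF ij(1,2,4) ABi AB this k'] k' show ?thesis by blast
  qed
  have t0: "E i = B i \<or> E j = A j" if E: "E \<in> F" and h: "\<forall>l\<in>I. l \<noteq> i \<longrightarrow> l \<noteq> j \<longrightarrow> E l = A l" for E
  proof (rule ccontr)
    assume "\<not> (E i = B i \<or> E j = A j)"
    then have "E i \<noteq> C i" "E j \<noteq> C j" using Cij by auto
    moreover have "close2 I E C" using pw E AF by auto
    ultimately have "E k = C k" using W[of I E C i j k] ij by auto
    then show False using h ij Ck by auto
  qed
  have t0': "E i = A i \<or> E j = B j" if E: "E \<in> F" and h: "\<forall>l\<in>I. l \<noteq> i \<longrightarrow> l \<noteq> j \<longrightarrow> E l = A l"
    and C'F: "C' \<in> F" for E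
  proof (rule ccontr)
    assume "\<not> (E i = A i \<or> E j = B j)"
    then have "E i \<noteq> C' i" "E j \<noteq> C' j" using ij unfolding C'_def by auto
    moreover have "close2 I E C'" using pw E C'F by auto
    ultimately have "E k = C' k" using W[of I E C' i j k] ij by auto
    then show False using h ij Ck unfolding C'_def by auto
  qed
  have t2: "E = C'" if E: "E \<in> F" and h: "\<forall>l\<in>I. l \<noteq> i \<longrightarrow> l \<noteq> j \<longrightarrow> l \<noteq> k' \<longrightarrow> E l = A l"
    and e: "E i = A i" "E j = B j" for E k'
  proof (rule PiE_ext[of E I S])
    show "E \<in> PiE I S" using E F by auto
    show "C' \<in> PiE I S" by (rule C'P)
    have cl: "close2 I E C" using pw E AF by auto
    fix l assume l: "l \<in> I"
    show "E l = C' l"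
    proof (cases "l = i \<or> l = j")
      case True then show ?thesis using e ij unfolding C'_def by auto
    next
      case False
      have "E l = C l" using W[OF cl ij(1,2,4), of l] e Cij ABi l False by auto
      then show ?thesis using False unfolding C'_def by auto
    qed
  qed
  have t1: "E = C" if E: "E \<in> F" and h: "\<forall>l\<in>I. l \<noteq> i \<longrightarrow> l \<noteq> j \<longrightarrow> l \<noteq> k' \<longrightarrow> E l = A l"
    and e: "E i = B i" "E j = A j" and C'F: "C' \<in> F" for E k'
  proof (rule PiE_ext[of E I S])
    show "E \<in> PiE I S" using E F by auto
    show "C \<in> PiE I S" by (rule AP)
    have cl: "close2 I E C'" using pw E C'F by auto
    fix l assume l: "l \<in> I"
    show "E l = C l"
    proof (cases "l = i \<or> l = j")
      case True then show ?thesis using e Cij by auto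
    next
      case False
      have "E l = C' l" using W[OF cl ij(1,2,4), of l] e ABi l False ij unfolding C'_def by auto
      then show ?thesis using False unfolding C'_def by auto
    qed
  qed
  have eqA: "E = A" if E: "E \<in> F" and h: "\<forall>l\<in>I. l \<noteq> i \<longrightarrow> l \<noteq> j \<longrightarrow> E l = A l"
    and e: "E i = A i" "E j = A j" for E
    by (rule PiE_ext[of E I S]) (use E F AP h e in auto)
  have eqB: "E = B" if E: "E \<in> F" and h: "\<forall>l\<in>I. l \<noteq> i \<longrightarrow> l \<noteq> j \<longrightarrow> E l = A l"
    and e: "E i = B i" "E j = B j" for E
    by (rule PiE_ext[of E I S]) (use E F AP h e AB in auto)
  show ?thesis
  proof (cases "C' \<in> F")
    case True
    have "E \<in> {A, B, C, C'}" if E: "E \<in> F" for E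
      using classify[OF E]
    proof
      assume h: "\<forall>l\<in>I. l \<noteq> i \<longrightarrow> l \<noteq> j \<longrightarrow> E l = A l"
      have a: "E i = B i \<or> E j = A j" and b: "E i = A i \<or> E j = B j"
        using t0[OF E h] t0'[OF E h True] by blast+
      show ?thesis
      proof (cases "E i = A i")
        case True
        then have "E j = A j" using a ABi by metis
        then have "E = A" using eqA[OF E h] True by blast
        then show ?thesis by blast
      next
        case False
        then have "E j = B j" "E i = B i" using a b ABi by metis+
        then have "E = B" using eqB[OF E h] by blast
        then show ?thesis by blast
      qed
    next
      assume "\<exists>k'\<in>I. k' \<noteq> i \<and> k' \<noteq> j \<and> (\<forall>l\<in>I. l \<noteq> i \<longrightarrow> l \<noteq> j \<longrightarrow> l \<noteq> k' \<longrightarrow> E l = A l)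
        \<and> ((E i = B i \<and> E j = A j) \<or> (E i = A i \<and> E j = B j))"
      then obtain k' where h: "\<forall>l\<in>I. l \<noteq> i \<longrightarrow> l \<noteq> j \<longrightarrow> l \<noteq> k' \<longrightarrow> E l = A l"
        and d: "(E i = B i \<and> E j = A j) \<or> (E i = A i \<and> E j = B j)" by blast
      from d show ?thesis
      proof
        assume "E i = B i \<and> E j = A j"
        then have "E = C" using t1[OF E h _ _ True] by blast
        then show ?thesis by blast
      next
        assume "E i = A i \<and> E j = B j"
        then have "E = C'" using t2[OF E h] by blast
        then show ?thesis by blast
      qed
    qed
    then show ?thesis unfolding C'_def by blast
  next
    case False
    have "close1 I P E" if E: "E \<in> F" for E
      using classify[OF E]
    proof
      assume h: "\<forall>l\<in>I. l \<noteq> i \<longrightarrow> l \<noteq> j \<longrightarrow> E l = A l"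
      from t0[OF E h] show ?thesis
      proof
        assume "E i = B i"
        then show ?thesis unfolding close1_def P_def using h by (intro exI[of _ j]) auto
      next
        assume "E j = A j"
        then show ?thesis unfolding close1_def P_def using h ij by (intro exI[of _ i]) auto
      qed
    next
      assume "\<exists>k'\<in>I. k' \<noteq> i \<and> k' \<noteq> j \<and> (\<forall>l\<in>I. l \<noteq> i \<longrightarrow> l \<noteq> j \<longrightarrow> l \<noteq> k' \<longrightarrow> E l = A l)
        \<and> ((E i = B i \<and> E j = A j) \<or> (E i = A i \<and> E j = B j))"
      then obtain k' where h: "\<forall>l\<in>I. l \<noteq> i \<longrightarrow> l \<noteq> j \<longrightarrow> l \<noteq> k' \<longrightarrow> E l = A l"
        and d: "(E i = B i \<and> E j = A j) \<or> (E i = A i \<and> E j = B j)" by blast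
      have "\<not> (E i = A i \<and> E j = B j)" using t2[OF E h] False E by blast
      with d have "E i = B i" "E j = A j" by auto
      then show ?thesis unfolding close1_def P_def using h ij by (intro exI[of _ k']) auto
    qed
    then show ?thesis unfolding P_def by blast
  qed
qed


lemma M:
  assumes F: "F \<subseteq> PiE I S" and pw: "\<forall>X\<in>F. \<forall>Y\<in>F. close2 I X Y"
    and nt: "\<not> (\<exists>i j. \<forall>l\<in>I. l \<noteq> i \<longrightarrow> l \<noteq> j \<longrightarrow> (\<forall>X\<in>F. \<forall>Y\<in>F. X l = Y l))"
  shows "(\<exists>c\<in>PiE I S. \<forall>E\<in>F. close1 I c E) \<or> (\<exists>a b c d. F \<subseteq> {a, b, c, d})"
proof (cases "F = {}")
  case True then show ?thesis by blast
next
  case False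
  then obtain A where A: "A \<in> F" by blast
  show ?thesis
  proof (cases "\<forall>E\<in>F. close1 I A E")
    case True then show ?thesis using A F by blast
  next
    case False
    then obtain B where B: "B \<in> F" and nB: "\<not> close1 I A B" by blast
    have "close2 I A B" using pw A B by blast
    then obtain p q where pq: "\<forall>l\<in>I. l \<noteq> p \<longrightarrow> l \<noteq> q \<longrightarrow> A l = B l"
      unfolding close2_def by blast
    have p: "p \<in> I \<and> A p \<noteq> B p"
    proof (rule ccontr)
      assume "\<not> (p \<in> I \<and> A p \<noteq> B p)"
      then have "close1 I A B" unfolding close1_def using pq by (intro exI[of _ q]) auto
      then show False using nB by blast
    qed
    have q: "q \<in> I \<and> A q \<noteq> B q"
    proof (rule ccontr)
      assume "\<not> (q \<in> I \<and> A q \<noteq> B q)"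
      then have "close1 I A B" unfolding close1_def using pq by (intro exI[of _ p]) auto
      then show False using nB by blast
    qed
    have pnq: "p \<noteq> q"
    proof
      assume "p = q"
      then have "close1 I A B" unfolding close1_def using pq by (intro exI[of _ p]) auto
      then show False using nB by blast
    qed
    obtain l X Y where l: "l \<in> I" "l \<noteq> p" "l \<noteq> q" and XY: "X \<in> F" "Y \<in> F" "X l \<noteq> Y l"
      using nt by blast
    obtain C where C: "C \<in> F" "C l \<noteq> A l" using XY by metis
    have cl: "close2 I C A" "close2 I C B" using pw C A B by blast+
    have K1: "(\<forall>m\<in>I. m \<noteq> p \<longrightarrow> m \<noteq> q \<longrightarrow> m \<noteq> l \<longrightarrow> C m = A m) \<and>
         ((C p = B p \<and> C q = A q) \<or> (C p = A p \<and> C q = B q))"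
      by (rule K[OF _ _ pnq _ _ pq cl l(1) l(2) l(3) C(2)]) (use p q in auto)
    have PA: "A \<in> PiE I S" "B \<in> PiE I S" using A B F by auto
    from K1 have disj: "(C p = B p \<and> C q = A q) \<or> (C p = A p \<and> C q = B q)" by blast
    then show ?thesis
    proof
      assume h: "C p = B p \<and> C q = A q"
      have "(\<forall>E\<in>F. close1 I (A(p:=B p)) E) \<or> F \<subseteq> {A, B, C, C(p:=A p, q:=B q)}"
        by (rule M2[OF F pw A B C(1)]) (use p q pnq l pq C K1 h in auto)
      moreover have "A(p:=B p) \<in> PiE I S" using upd_PiE[OF PA(1)] p PA(2) by (auto intro: PiE_mem)
      ultimately show ?thesis by blast
    next
      assume h: "C p = A p \<and> C q = B q"
      have "(\<forall>E\<in>F. close1 I (B(p:=A p)) E) \<or> F \<subseteq> {B, A, C, C(p:=B p, q:=A q)}"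
        by (rule M2[OF F pw B A C(1)]) (use p q pnq l pq C K1 h in auto)
      moreover have "B(p:=A p) \<in> PiE I S" using upd_PiE[OF PA(2)] p PA(1) by (auto intro: PiE_mem)
      ultimately show ?thesis by blast
    qed
  qed
qed


lemma card_le2:
  assumes "finite D" "card D \<le> 2"
  shows "\<exists>p q. D \<subseteq> {p, q}"
proof -
  have "card D = 0 \<or> card D = 1 \<or> card D = 2" using assms(2) by linarith
  then show ?thesis
  proof (elim disjE)
    assume "card D = 0" then show ?thesis using assms(1) by auto
  next
    assume "card D = 1" then obtain x where "D = {x}" by (auto simp: card_1_singleton_iff)
    then show ?thesis by blast
  next
    assume "card D = 2" then obtain x y where "D = {x, y}" by (auto simp: card_2_iff)
    then show ?thesis by blast
  qed
qed

lemma card_minus2: "card ({1..r::nat} - {p, q}) \<ge> r - 2"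
proof -
  have "card {1..r} - card {p, q} \<le> card ({1..r::nat} - {p, q})"
    by (rule diff_card_le_card_Diff) auto
  moreover have "card {p, q} \<le> 2" by (simp add: card_insert_if)
  ultimately show ?thesis by simp
qed

lemma agree_close2:
  assumes "card (agree r X Y) \<ge> r - 2"
  shows "close2 {1..r} X Y"
proof -
  define D where "D = {l \<in> {1..r}. X l \<noteq> Y l}"
  have D: "D = {1..r} - agree r X Y" unfolding D_def agree_def by auto
  have "card D = card {1..r} - card (agree r X Y)"
    unfolding D by (rule card_Diff_subset) (auto simp: agree_def)
  then have "card D \<le> 2" using assms by simp
  then obtain p q where "D \<subseteq> {p, q}" using card_le2[of D] unfolding D_def by auto
  then show ?thesis unfolding close2_def D_def by blast
qed

lemma close2_agree:
  assumes "close2 {1..r} X Y"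
  shows "card (agree r X Y) \<ge> r - 2"
proof -
  obtain p q where pq: "\<forall>l\<in>{1..r}. l \<noteq> p \<longrightarrow> l \<noteq> q \<longrightarrow> X l = Y l"
    using assms unfolding close2_def by blast
  have "{1..r} - {p, q} \<subseteq> agree r X Y" using pq unfolding agree_def by auto
  then have "card ({1..r} - {p, q}) \<le> card (agree r X Y)"
    by (rule card_mono[rotated]) (simp add: agree_def)
  then show ?thesis using card_minus2[of r p q] by linarith
qed

lemma nt_conv:
  assumes "card (common_coords r F) < r - 2"
  shows "\<not> (\<exists>i j. \<forall>l\<in>{1..r}. l \<noteq> i \<longrightarrow> l \<noteq> j \<longrightarrow> (\<forall>X\<in>F. \<forall>Y\<in>F. X l = Y l))"
proof
  assume "\<exists>i j. \<forall>l\<in>{1..r}. l \<noteq> i \<longrightarrow> l \<noteq> j \<longrightarrow> (\<forall>X\<in>F. \<forall>Y\<in>F. X l = Y l)"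
  then obtain p q where pq: "\<forall>l\<in>{1..r}. l \<noteq> p \<longrightarrow> l \<noteq> q \<longrightarrow> (\<forall>X\<in>F. \<forall>Y\<in>F. X l = Y l)" by blast
  have "{1..r} - {p, q} \<subseteq> common_coords r F" using pq unfolding common_coords_def by auto
  then have "card ({1..r} - {p, q}) \<le> card (common_coords r F)"
    by (rule card_mono[rotated]) (simp add: common_coords_def)
  then show False using card_minus2[of r p q] assms by linarith
qed

lemma ball_card:
  assumes c: "c \<in> PiE {1..r} (\<lambda>l. {1..n l})"
  shows "card {E \<in> PiE {1..r} (\<lambda>l. {1..n l}). close1 {1..r} c E} \<le> 1 + (\<Sum>l=1..r. n l - 1)"
proof -
  let ?I = "{1..r::nat}" and ?S = "\<lambda>l. {1..n l}"
  let ?U = "\<Union>l\<in>?I. (\<lambda>v. c(l:=v)) ` ({1..n l} - {c l})"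
  have sub: "{E \<in> PiE ?I ?S. close1 ?I c E} \<subseteq> insert c ?U"
  proof
    fix E assume E: "E \<in> {E \<in> PiE ?I ?S. close1 ?I c E}"
    then have EP: "E \<in> PiE ?I ?S" and "close1 ?I c E" by auto
    then obtain p where p: "\<forall>l\<in>?I. l \<noteq> p \<longrightarrow> c l = E l" unfolding close1_def by blast
    show "E \<in> insert c ?U"
    proof (cases "p \<in> ?I \<and> E p \<noteq> c p")
      case True
      have "E = c(p := E p)"
        by (rule PiE_ext[OF EP upd_PiE[OF c]]) (use True p EP in \<open>auto intro: PiE_mem\<close>)
      moreover have "E p \<in> {1..n p} - {c p}" using True EP by (auto dest: PiE_mem)
      ultimately show ?thesis using True by blast
    next
      case False
      have "E = c" by (rule PiE_ext[OF EP c]) (use False p in metis)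
      then show ?thesis by blast
    qed
  qed
  have fin: "finite ?U" by auto
  have "card {E \<in> PiE ?I ?S. close1 ?I c E} \<le> card (insert c ?U)"
    by (rule card_mono[OF _ sub]) (use fin in auto)
  also have "\<dots> \<le> Suc (card ?U)" by (simp add: card_insert_if)
  also have "card ?U \<le> (\<Sum>l\<in>?I. card ((\<lambda>v. c(l:=v)) ` ({1..n l} - {c l})))"
    by (rule card_UN_le) simp
  also have "\<dots> \<le> (\<Sum>l\<in>?I. n l - 1)"
  proof (rule sum_mono)
    fix l assume l: "l \<in> ?I"
    have "c l \<in> {1..n l}" using c l by (auto dest: PiE_mem)
    then have "card ({1..n l} - {c l}) = n l - 1" by simp
    then show "card ((\<lambda>v. c(l:=v)) ` ({1..n l} - {c l})) \<le> n l - 1"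
      using card_image_le[of "{1..n l} - {c l}" "\<lambda>v. c(l:=v)"] by simp
  qed
  finally show ?thesis by simp
qed


lemma sum_minus1:
  assumes "\<forall>l\<in>{1..r}. n l \<ge> (2::nat)"
  shows "(\<Sum>l=1..r. n l - 1) + r = (\<Sum>l=1..r. n l)"
proof -
  have "(\<Sum>l=1..r. (n l - 1) + 1) = (\<Sum>l=1..r. n l - 1) + (\<Sum>l=1..r. (1::nat))"
    by (rule sum.distrib)
  then have "(\<Sum>l=1..r. n l - 1) + r = (\<Sum>l=1..r. (n l - 1) + 1)"
    by simp
  also have "\<dots> = (\<Sum>l=1..r. n l)" proof (rule sum.cong[OF refl])
    fix x assume "x \<in> {1..r}" then have "n x \<ge> 2" using assms by blast
    then show "n x - 1 + 1 = n x" by simp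
  qed
  finally show ?thesis .
qed

lemma lower:
  assumes r: "r \<ge> 3" and n: "\<forall>l\<in>{1..r}. n l \<ge> 2"
  shows "\<exists>F. F \<subseteq> prod_space r n \<and> nontrivial_t_intersecting r (r - 2) F \<and>
             card F = 1 + (\<Sum>l=1..r. n l - 1)"
proof -
  let ?I = "{1..r::nat}" and ?S = "\<lambda>l. {1..n l}"
  define c0 where "c0 = restrict (\<lambda>_. 1::nat) ?I"
  define U where "U = (\<Union>l\<in>?I. (\<lambda>v. c0(l:=v)) ` {2..n l})"
  define F where "F = insert c0 U"
  have c0P: "c0 \<in> PiE ?I ?S" unfolding c0_def using n by auto
  have sub: "F \<subseteq> prod_space r n"
  proof
    fix x assume "x \<in> F"
    then show "x \<in> prod_space r n" unfolding F_def U_def prod_space_def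
      using c0P by (auto intro!: upd_PiE)
  qed
  have near: "\<exists>p. \<forall>l\<in>?I. l \<noteq> p \<longrightarrow> x l = c0 l" if "x \<in> F" for x
    using that unfolding F_def U_def by auto
  have tint: "t_intersecting r (r - 2) F"
    unfolding t_intersecting_def
  proof (intro ballI)
    fix X Y assume "X \<in> F" "Y \<in> F"
    then obtain p q where "\<forall>l\<in>?I. l \<noteq> p \<longrightarrow> X l = c0 l" "\<forall>l\<in>?I. l \<noteq> q \<longrightarrow> Y l = c0 l"
      using near by blast
    then have "close2 ?I X Y" unfolding close2_def by (intro exI[of _ p] exI[of _ q]) auto
    then show "card (agree r X Y) \<ge> r - 2" by (rule close2_agree)
  qed
  have common: "common_coords r F = {}"
  proof -
    have "l \<notin> common_coords r F" if l: "l \<in> ?I" for l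
    proof -
      have "c0(l:=2) \<in> (\<lambda>v. c0(l:=v)) ` {2..n l}" using l n by auto
      then have "c0(l:=2) \<in> F" unfolding F_def U_def using l by blast
      moreover have "c0 \<in> F" unfolding F_def by auto
      moreover have "c0 l \<noteq> (c0(l:=2)) l" using l unfolding c0_def by auto
      ultimately show ?thesis unfolding common_coords_def by blast
    qed
    then show ?thesis unfolding common_coords_def by blast
  qed
  have nt: "nontrivial_t_intersecting r (r - 2) F"
    unfolding nontrivial_t_intersecting_def using tint common r by simp
  have c0U: "c0 \<notin> U"
  proof
    assume "c0 \<in> U"
    then obtain l v where "l \<in> ?I" "v \<in> {2..n l}" "c0 = c0(l:=v)" unfolding U_def by blast
    then have "c0 l = v" by (metis fun_upd_same)
    then show False using \<open>l \<in> ?I\<close> \<open>v \<in> {2..n l}\<close> unfolding c0_def by auto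
  qed
  have "card U = (\<Sum>l\<in>?I. card ((\<lambda>v. c0(l:=v)) ` {2..n l}))"
    unfolding U_def
  proof (rule card_UN_disjoint)
    show "finite ?I" by simp
    show "\<forall>i\<in>?I. finite ((\<lambda>v. c0(i:=v)) ` {2..n i})" by simp
    show "\<forall>i\<in>?I. \<forall>j\<in>?I. i \<noteq> j \<longrightarrow> (\<lambda>v. c0(i:=v)) ` {2..n i} \<inter> (\<lambda>v. c0(j:=v)) ` {2..n j} = {}"
    proof (intro ballI impI)
      fix i j assume ij: "i \<in> ?I" "j \<in> ?I" "i \<noteq> j"
      show "(\<lambda>v. c0(i:=v)) ` {2..n i} \<inter> (\<lambda>v. c0(j:=v)) ` {2..n j} = {}"
      proof (rule ccontr)
        assume "\<not> ?thesis"
        then obtain v w where vw: "v \<in> {2..n i}" "w \<in> {2..n j}" "c0(i:=v) = c0(j:=w)" by blast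
        then have "(c0(i:=v)) i = (c0(j:=w)) i" by simp
        then have "v = c0 i" using ij by simp
        then show False using vw ij unfolding c0_def by auto
      qed
    qed
  qed
  also have "\<dots> = (\<Sum>l\<in>?I. n l - 1)"
  proof (rule sum.cong[OF refl])
    fix l assume l: "l \<in> ?I"
    have "inj_on (\<lambda>v. c0(l:=v)) {2..n l}"
      by (rule inj_onI) (metis fun_upd_same)
    then show "card ((\<lambda>v. c0(l:=v)) ` {2..n l}) = n l - 1" by (simp add: card_image)
  qed
  finally have "card F = 1 + (\<Sum>l=1..r. n l - 1)"
    unfolding F_def using c0U by (simp add: U_def)
  then show ?thesis using sub nt by blast
qed

theorem theorem1p4:
  fixes r :: nat and n :: "nat \<Rightarrow> nat"
  assumes "r \<ge> 3"
    and "\<forall>l\<in>{1..r}. n l \<ge> 2"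
    and "\<forall>i j. 1 \<le> i \<and> i \<le> j \<and> j \<le> r \<longrightarrow> n j \<le> n i"
  shows "iota0 (r - 2) r n = (\<Sum>l=1..r. n l) - r + 1"
proof -
  let ?N = "1 + (\<Sum>l=1..r. n l - 1)"
  have Neq: "?N = (\<Sum>l=1..r. n l) - r + 1" using sum_minus1[OF assms(2)] by linarith
  have "(\<Sum>l=1..r. (1::nat)) \<le> (\<Sum>l=1..r. n l - 1)"
  proof (rule sum_mono)
    fix x assume "x \<in> {1..r}" then have "n x \<ge> 2" using assms(2) by blast
    then show "(1::nat) \<le> n x - 1" by simp
  qed
  then have N4: "4 \<le> ?N" using assms(1) by simp
  let ?Sset = "{card F | F. F \<subseteq> prod_space r n \<and> nontrivial_t_intersecting r (r - 2) F}"
  have finP: "finite (prod_space r n)" unfolding prod_space_def by (rule finite_PiE) auto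
  have "?Sset \<subseteq> card ` Pow (prod_space r n)" by auto
  then have fin: "finite ?Sset" using finP by (meson finite_Pow_iff finite_imageI finite_subset)
  have upper: "y \<le> ?N" if "y \<in> ?Sset" for y
  proof -
    obtain F where y: "y = card F" and FP: "F \<subseteq> prod_space r n"
      and nt: "nontrivial_t_intersecting r (r - 2) F" using \<open>y \<in> ?Sset\<close> by blast
    have FP': "F \<subseteq> PiE {1..r} (\<lambda>l. {1..n l})" using FP unfolding prod_space_def .
    have pw: "\<forall>X\<in>F. \<forall>Y\<in>F. close2 {1..r} X Y"
    proof (intro ballI)
      fix X Y assume "X \<in> F" "Y \<in> F"
      then show "close2 {1..r} X Y"
        using nt unfolding nontrivial_t_intersecting_def t_intersecting_def
        by (intro agree_close2) blast
    qed
    have ntc: "\<not> (\<exists>i j. \<forall>l\<in>{1..r}. l \<noteq> i \<longrightarrow> l \<noteq> j \<longrightarrow> (\<forall>X\<in>F. \<forall>Y\<in>F. X l = Y l))"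
      using nt unfolding nontrivial_t_intersecting_def by (intro nt_conv) blast
    have finF: "finite F" using FP finP finite_subset by blast
    from M[OF FP' pw ntc] show ?thesis
    proof
      assume "\<exists>c\<in>PiE {1..r} (\<lambda>l. {1..n l}). \<forall>E\<in>F. close1 {1..r} c E"
      then obtain c where c: "c \<in> PiE {1..r} (\<lambda>l. {1..n l})" and cE: "\<forall>E\<in>F. close1 {1..r} c E" by blast
      have "F \<subseteq> {E \<in> PiE {1..r} (\<lambda>l. {1..n l}). close1 {1..r} c E}" using FP' cE by blast
      moreover have "finite {E \<in> PiE {1..r} (\<lambda>l. {1..n l}). close1 {1..r} c E}"
        by (rule finite_subset[OF _ finP[unfolded prod_space_def]]) blast
      ultimately have "card F \<le> card {E \<in> PiE {1..r} (\<lambda>l. {1..n l}). close1 {1..r} c E}"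
        using card_mono by blast
      then show ?thesis using ball_card[OF c] y by linarith
    next
      assume "\<exists>a b c d. F \<subseteq> {a, b, c, d}"
      then obtain a b c d where "F \<subseteq> {a, b, c, d}" by blast
      then have "card F \<le> card {a, b, c, d}" by (rule card_mono[rotated]) simp
      also have "\<dots> \<le> 4" using card_length[of "[a, b, c, d]"] by simp
      finally show ?thesis using y N4 by linarith
    qed
  qed
  obtain F0 where F0: "F0 \<subseteq> prod_space r n" "nontrivial_t_intersecting r (r - 2) F0" "card F0 = ?N"
    using lower[OF assms(1,2)] by blast
  have NS: "?N \<in> ?Sset" unfolding mem_Collect_eq
    by (rule exI[of _ F0]) (use F0 in simp)
  have "Max ?Sset = ?N" by (rule Max_eqI[OF fin upper NS])
  then show ?thesis unfolding iota0_def using Neq by simp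
qed

end
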